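(* Let $X$ be a Polish space, $f:X\to\mathbb R$ a Baire-1 function and $a<b$ reals. Then $$\alpha(f,a,b)=\sup\{\alpha(f,K,a,b):K\subseteq X\text{ compact}\}.$$
   Context: Separation rank: for $f:X\to\mathbb R$, reals $a<b$ and closed $F\subseteq X$, let $F'_{f,a,b}=\overline{F\cap[f<a]}\cap\overline{F\cap[f>b]}$, where $[f<a]=\{x:f(x)<a\}$, $[f>b]=\{x:f(x)>b\}$. Define iterated derivatives $F^{(0)}_{f,a,b}=F$, $F^{(\xi+1)}_{f,a,b}=(F^{(\xi)}_{f,a,b})'_{f,a,b}$ and $F^{(\lambda)}_{f,a,b}=\bigcap_{\xi<\lambda}F^{(\xi)}_{f,a,b}$ for limit $\lambda$. $\alpha(f,F,a,b)$ is the least ordinal $\xi$ with $F^{(\xi)}_{f,a,b}=\varnothing$ if such $\xi<\omega_1$ exists, and $\omega_1$ otherwise; $\alpha(f,a,b)=\alpha(f,X,a,b)$. *)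

theory Defs
  imports "HOL-Analysis.Analysis"
begin

definition baire1 :: "('a::topological_space \<Rightarrow> real) \<Rightarrow> bool" where
  "baire1 f \<longleftrightarrow> (\<exists>g :: nat \<Rightarrow> 'a \<Rightarrow> real.
      (\<forall>n. continuous_on UNIV (g n)) \<and> (\<forall>x. (\<lambda>n. g n x) \<longlonglongrightarrow> f x))"

definition sep_deriv :: "('a::topological_space \<Rightarrow> real) \<Rightarrow> real \<Rightarrow> real \<Rightarrow> 'a set \<Rightarrow> 'a set" where
  "sep_deriv f a b F = closure (F \<inter> {x. f x < a}) \<inter> closure (F \<inter> {x. f x > b})"

text \<open>Transfinite iteration F^(i), indexed by elements i of a well-ordered type; the
  ordinal represented by i is the order type of the initial segment below i.\<close>
definition sep_iter :: "('a::topological_space \<Rightarrow> real) \<Rightarrow> real \<Rightarrow> real \<Rightarrow> 'a set \<Rightarrow> 'i::wellorder \<Rightarrow> 'a set" where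
  "sep_iter f a b F = wfrec {(j, i). j < i} (\<lambda>D i.
     if \<not> (\<exists>j. j < i) then F
     else if (\<exists>j. j < i \<and> \<not> (\<exists>k. j < k \<and> k < i))
       then sep_deriv f a b (D (THE j. j < i \<and> \<not> (\<exists>k. j < k \<and> k < i)))
     else \<Inter> {D j | j. j < i})"

end

theory Submission
  imports Defs
begin

lemma sep_iter_unfold:
  "sep_iter f a b F (i::'i::wellorder) =
     (if \<not> (\<exists>j. j < i) then F
     else if (\<exists>j. j < i \<and> \<not> (\<exists>k. j < k \<and> k < i))
       then sep_deriv f a b (sep_iter f a b F (THE j. j < i \<and> \<not> (\<exists>k. j < k \<and> k < i)))
     else \<Inter> {sep_iter f a b F j | j. j < i})"
proof -
  have wf: "wf {(j::'i, i). j < i}" by (rule wf)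
  have th: "(\<exists>j. j < i \<and> \<not> (\<exists>k. j < k \<and> k < i)) \<Longrightarrow>
     (THE j. j < i \<and> \<not> (\<exists>k. j < k \<and> k < i)) < i"
  proof -
    assume "\<exists>j. j < i \<and> \<not> (\<exists>k. j < k \<and> k < i)"
    then obtain p where p: "p < i" "\<not> (\<exists>k. p < k \<and> k < i)" by blast
    have "(THE j. j < i \<and> \<not> (\<exists>k. j < k \<and> k < i)) = p"
    proof (rule the_equality)
      show "p < i \<and> \<not> (\<exists>k. p < k \<and> k < i)" using p by blast
    next
      fix j assume "j < i \<and> \<not> (\<exists>k. j < k \<and> k < i)"
      then show "j = p" using p by (metis neqE)
    qed
    with p show ?thesis by simp
  qed
  show ?thesis
    unfolding sep_iter_def
    apply (subst wfrec[OF wf])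
    using th by (auto simp: cut_def)
qed

lemma sep_iter_zero: "\<not> (\<exists>j. j < (i::'i::wellorder)) \<Longrightarrow> sep_iter f a b F i = F"
  by (subst sep_iter_unfold) simp

lemma sep_iter_succ:
  assumes "p < (i::'i::wellorder)" "\<not> (\<exists>k. p < k \<and> k < i)"
  shows "sep_iter f a b F i = sep_deriv f a b (sep_iter f a b F p)"
proof -
  have "(THE j. j < i \<and> \<not> (\<exists>k. j < k \<and> k < i)) = p"
  proof (rule the_equality)
    show "p < i \<and> \<not> (\<exists>k. p < k \<and> k < i)" using assms by blast
  next
    fix j assume "j < i \<and> \<not> (\<exists>k. j < k \<and> k < i)"
    then show "j = p" using assms by (metis neqE)
  qed
  then show ?thesis using assms by (subst sep_iter_unfold) auto
qed

lemma sep_iter_lim: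
  assumes "\<exists>j. j < (i::'i::wellorder)" "\<not> (\<exists>j. j < i \<and> \<not> (\<exists>k. j < k \<and> k < i))"
  shows "sep_iter f a b F i = \<Inter> {sep_iter f a b F j | j. j < i}"
  using assms by (subst sep_iter_unfold) auto

lemma sep_iter_mono:
  "F \<subseteq> G \<Longrightarrow> sep_iter f a b F (i::'i::wellorder) \<subseteq> sep_iter f a b G i"
proof (induction i rule: less_induct)
  case (less i)
  show ?case
  proof (cases "\<exists>j. j < i")
    case False
    then show ?thesis using less by (simp add: sep_iter_zero)
  next
    case True
    show ?thesis
    proof (cases "\<exists>j. j < i \<and> \<not> (\<exists>k. j < k \<and> k < i)")
      case True
      then obtain p where p: "p < i" "\<not> (\<exists>k. p < k \<and> k < i)" by blast
      have "sep_iter f a b F p \<subseteq> sep_iter f a b G p" using less p by blast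
      then show ?thesis unfolding sep_iter_succ[OF p] sep_deriv_def
        by (intro Int_mono closure_mono) auto
    next
      case False
      then show ?thesis using \<open>\<exists>j. j < i\<close> less
        by (simp add: sep_iter_lim) blast
    qed
  qed
qed

lemma compact_shrink:
  fixes x :: "'a::metric_space"
  assumes cK: "\<And>n. compact (K n)" and sK: "\<And>n. K n \<subseteq> ball x (1 / Suc n)"
  shows "compact (insert x (\<Union>n. K n))"
proof (rule compactI)
  fix C assume oC: "\<forall>t\<in>C. open t" and cov: "insert x (\<Union>n. K n) \<subseteq> \<Union>C"
  then obtain T where T: "T \<in> C" "x \<in> T" by blast
  then obtain e where e: "e > 0" "ball x e \<subseteq> T" using oC open_contains_ball by blast
  obtain N where N: "1 / Suc N < e"
    using e(1) by (metis nat_approx_posE)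
  have big: "K n \<subseteq> T" if "n \<ge> N" for n
  proof -
    have "1 / real (Suc n) \<le> 1 / Suc N" using that by (simp add: frac_le)
    then have "ball x (1 / Suc n) \<subseteq> ball x e" using N by (intro subset_ball) linarith
    then show ?thesis using sK[of n] e by blast
  qed
  have "compact (\<Union>n<N. K n)" using cK by (intro compact_UN) auto
  moreover have "(\<Union>n<N. K n) \<subseteq> \<Union>C" using cov by blast
  ultimately obtain D where D: "D \<subseteq> C" "finite D" "(\<Union>n<N. K n) \<subseteq> \<Union>D"
    using oC by (meson compactE)
  show "\<exists>C'\<subseteq>C. finite C' \<and> insert x (\<Union>n. K n) \<subseteq> \<Union>C'"
  proof (intro exI conjI)
    show "insert T D \<subseteq> C" using D T by auto
    show "finite (insert T D)" using D by auto
    show "insert x (\<Union>n. K n) \<subseteq> \<Union>(insert T D)"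
    proof
      fix y assume "y \<in> insert x (\<Union>n. K n)"
      then show "y \<in> \<Union>(insert T D)"
      proof
        assume "y = x" then show ?thesis using T by auto
      next
        assume "y \<in> (\<Union>n. K n)"
        then obtain n where n: "y \<in> K n" by auto
        show ?thesis
        proof (cases "n < N")
          case True then show ?thesis using D n by blast
        next
          case False then show ?thesis using big[of n] n by auto
        qed
      qed
    qed
  qed
qed

lemma key:
  fixes f :: "'a::metric_space \<Rightarrow> real" and i :: "'i::wellorder"
  shows "countable {j. j < i} \<Longrightarrow> x \<in> sep_iter f a b UNIV i \<Longrightarrow> open U \<Longrightarrow> x \<in> U \<Longrightarrow>
     \<exists>K. compact K \<and> K \<subseteq> U \<and> x \<in> sep_iter f a b K i"
proof (induction i arbitrary: x U rule: less_induct)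
  case (less i)
  have IH: "\<exists>K. compact K \<and> K \<subseteq> V \<and> y \<in> sep_iter f a b K j"
    if "j < i" "y \<in> sep_iter f a b UNIV j" "open V" "y \<in> V" for j y V
  proof -
    have "{k. k < j} \<subseteq> {k. k < i}" using that(1) by auto
    then have "countable {k. k < j}" using less.prems(1) countable_subset by blast
    then show ?thesis using less.IH that by blast
  qed
  show ?case
  proof (cases "\<exists>j. j < i")
    case False
    show ?thesis
      by (rule exI[of _ "{x}"]) (use less.prems False in \<open>simp add: sep_iter_zero\<close>)
  next
    case True
    show ?thesis
    proof (cases "\<exists>j. j < i \<and> \<not> (\<exists>k. j < k \<and> k < i)")
      case True
      then obtain p where p: "p < i" "\<not> (\<exists>k. p < k \<and> k < i)" by blast
      define S where "S = sep_iter f a b UNIV p"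
      have xS: "x \<in> closure (S \<inter> {x. f x < a}) \<inter> closure (S \<inter> {x. f x > b})"
        using less.prems(2) unfolding sep_iter_succ[OF p] sep_deriv_def S_def .
      obtain e where e: "e > 0" "ball x e \<subseteq> U" using less.prems open_contains_ball by blast
      define r where "r n = min e (1 / Suc n)" for n :: nat
      have r: "r n > 0" "ball x (r n) \<subseteq> U" "ball x (r n) \<subseteq> ball x (1 / Suc n)" for n
        using e unfolding r_def by auto
      have gen: "\<forall>n. \<exists>K. compact K \<and> K \<subseteq> ball x (r n) \<and>
          (\<exists>y. y \<in> sep_iter f a b K p \<and> P y \<and> dist y x < r n)"
        if xP: "x \<in> closure (S \<inter> {x. P x})" for P
      proof
        fix n
        obtain y where y: "y \<in> S" "P y" "dist y x < r n"
          using xP r(1)[of n] unfolding closure_approachable by blast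
        have "y \<in> ball x (r n)" using y by (simp add: dist_commute)
        then obtain K where "compact K" "K \<subseteq> ball x (r n)" "y \<in> sep_iter f a b K p"
          using IH[OF p(1), of y "ball x (r n)"] y S_def by auto
        then show "\<exists>K. compact K \<and> K \<subseteq> ball x (r n) \<and>
          (\<exists>y. y \<in> sep_iter f a b K p \<and> P y \<and> dist y x < r n)" using y by blast
      qed
      obtain Ky where Ky: "\<forall>n. compact (Ky n) \<and> Ky n \<subseteq> ball x (r n) \<and>
          (\<exists>y. y \<in> sep_iter f a b (Ky n) p \<and> f y < a \<and> dist y x < r n)"
        using choice[OF gen[of "\<lambda>y. f y < a", OF IntD1[OF xS]]] by blast
      obtain Kz where Kz: "\<forall>n. compact (Kz n) \<and> Kz n \<subseteq> ball x (r n) \<and>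
          (\<exists>y. y \<in> sep_iter f a b (Kz n) p \<and> f y > b \<and> dist y x < r n)"
        using choice[OF gen[of "\<lambda>y. f y > b", OF IntD2[OF xS]]] by blast
      define KK where "KK = insert x (\<Union>n. Ky n \<union> Kz n)"
      have cKK: "compact KK" unfolding KK_def
      proof (rule compact_shrink)
        fix n show "compact (Ky n \<union> Kz n)" using Ky Kz by blast
        show "Ky n \<union> Kz n \<subseteq> ball x (1 / Suc n)" using Ky Kz r(3)[of n] by blast
      qed
      have sKK: "KK \<subseteq> U" unfolding KK_def using Ky Kz r(2) less.prems(4) by fastforce
      have appr: "x \<in> closure (sep_iter f a b KK p \<inter> {x. P x})"
        if H: "\<forall>n. \<exists>y. y \<in> sep_iter f a b (L n) p \<and> P y \<and> dist y x < r n"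
          and LK: "\<forall>n. L n \<subseteq> KK" for P L
        unfolding closure_approachable
      proof (intro allI impI)
        fix d :: real assume "d > 0"
        then obtain n where n: "1 / Suc n < d" by (metis nat_approx_posE)
        obtain y where y: "y \<in> sep_iter f a b (L n) p" "P y" "dist y x < r n" using H by blast
        have "y \<in> sep_iter f a b KK p" using sep_iter_mono[OF LK[rule_format, of n]] y by blast
        moreover have "dist y x < d" using y(3) n unfolding r_def by linarith
        ultimately show "\<exists>y\<in>sep_iter f a b KK p \<inter> {x. P x}. dist y x < d" using y by blast
      qed
      have "x \<in> closure (sep_iter f a b KK p \<inter> {x. f x < a})"
        by (rule appr[of Ky]) (use Ky in \<open>auto simp: KK_def\<close>)
      moreover have "x \<in> closure (sep_iter f a b KK p \<inter> {x. f x > b})"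
        by (rule appr[of Kz]) (use Kz in \<open>auto simp: KK_def\<close>)
      ultimately have "x \<in> sep_iter f a b KK i"
        unfolding sep_iter_succ[OF p] sep_deriv_def by blast
      then show ?thesis using cKK sKK by blast
    next
      case False
      define J where "J = {j. j < i}"
      have J: "J \<noteq> {}" "countable J" using \<open>\<exists>j. j < i\<close> less.prems(1) J_def by auto
      define g where "g = from_nat_into J"
      have gJ: "g n < i" for n using from_nat_into[OF J(1)] unfolding g_def J_def by auto
      have rg: "range g = J" unfolding g_def using J by simp
      have xj: "x \<in> sep_iter f a b UNIV j" if "j < i" for j
        using less.prems(2) that unfolding sep_iter_lim[OF \<open>\<exists>j. j < i\<close> False] by blast
      have ex: "\<forall>n. \<exists>K. compact K \<and> K \<subseteq> U \<inter> ball x (1 / Suc n) \<and> x \<in> sep_iter f a b K (g n)"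
      proof
        fix n
        show "\<exists>K. compact K \<and> K \<subseteq> U \<inter> ball x (1 / Suc n) \<and> x \<in> sep_iter f a b K (g n)"
          by (rule IH[OF gJ xj[OF gJ]]) (use less.prems in auto)
      qed
      obtain Kn where Kn: "\<forall>n. compact (Kn n) \<and> Kn n \<subseteq> U \<inter> ball x (1 / Suc n)
          \<and> x \<in> sep_iter f a b (Kn n) (g n)" using choice[OF ex] by blast
      define KK where "KK = insert x (\<Union>n. Kn n)"
      have cKK: "compact KK" unfolding KK_def
      proof (rule compact_shrink)
        fix n show "compact (Kn n)" using Kn by blast
        show "Kn n \<subseteq> ball x (1 / Suc n)" using Kn by blast
      qed
      have sKK: "KK \<subseteq> U" unfolding KK_def using Kn less.prems(4) by blast
      have "x \<in> sep_iter f a b KK j" if "j < i" for j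
      proof -
        from that rg obtain n where n: "j = g n" unfolding J_def by blast
        have "Kn n \<subseteq> KK" unfolding KK_def by blast
        then show ?thesis using sep_iter_mono[of "Kn n" KK] Kn n by blast
      qed
      then have "x \<in> sep_iter f a b KK i"
        unfolding sep_iter_lim[OF \<open>\<exists>j. j < i\<close> False] by blast
      then show ?thesis using cKK sKK by blast
    qed
  qed
qed

theorem proposition4p1:
  fixes f :: "'a::polish_space \<Rightarrow> real" and a b :: real and i :: "'i::wellorder"
  assumes "baire1 f" and "a < b" and "countable {j. j < i}"
  shows "sep_iter f a b UNIV i \<noteq> {} \<longleftrightarrow> (\<exists>K. compact K \<and> sep_iter f a b K i \<noteq> {})"
proof
  assume "sep_iter f a b UNIV i \<noteq> {}"
  then obtain x where "x \<in> sep_iter f a b UNIV i" by blast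
  then show "\<exists>K. compact K \<and> sep_iter f a b K i \<noteq> {}"
    using key[OF assms(3), of x f a b UNIV] by blast
next
  assume "\<exists>K. compact K \<and> sep_iter f a b K i \<noteq> {}"
  then show "sep_iter f a b UNIV i \<noteq> {}" using sep_iter_mono[of _ UNIV f a b i] by blast
qed

end
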